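(* Let $N\ge1$ be an integer, $d>0$, $T\ge (N+1)d$, and $0\le s_1\le\dots\le s_N$. Let $x^e$ be the optimal solution of the problem $(P^e)$: $$\min_{x\in\mathbb{R}^{N+1}}\ \sum_{i=1}^{N+1}x_i^2$$ subject to $\sum_{i=1}^k x_i\ge s_k+kd$ for $1\le k\le N$, and $\sum_{i=1}^{N+1}x_i=T+Nd$. Let $\bar x$ be the output of the Inter-Update Balancing Algorithm defined in the context. Then $x_i^e=\bar x_i$ for all $1\le i\le N$.
   Context: Inter-Update Balancing Algorithm. Set $s_0:=0$, $s_{N+1}:=T-d$, and $i_0:=0$. For $k=0,1,2,\dots$, while $i_k<N+1$, do the following. 1. Compute $M_k=\max_{i_k<j\le N+1}\frac{s_j-s_{i_k}}{j-i_k}$. 2. Let $i_{k+1}$ be the largest index $j\in\{i_k+1,\dots,N+1\}$ attaining this maximum. 3. Set $\bar x_i=M_k+d$ for all $i_k<i\le i_{k+1}$. The algorithm stops once $i_{k+1}=N+1$. Problem $(P^e)$ has a strictly convex objective, so its optimal solution is unique. *)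

theory Defs
  imports Complex_Main
begin

definition sx :: "nat \<Rightarrow> real \<Rightarrow> real \<Rightarrow> (nat \<Rightarrow> real) \<Rightarrow> nat \<Rightarrow> real" where
  "sx N T d s j = (if j = 0 then 0 else if j = N + 1 then T - d else s j)"

definition slope :: "nat \<Rightarrow> real \<Rightarrow> real \<Rightarrow> (nat \<Rightarrow> real) \<Rightarrow> nat \<Rightarrow> nat \<Rightarrow> real" where
  "slope N T d s i j = (sx N T d s j - sx N T d s i) / (real j - real i)"

definition ibM :: "nat \<Rightarrow> real \<Rightarrow> real \<Rightarrow> (nat \<Rightarrow> real) \<Rightarrow> nat \<Rightarrow> real" where
  "ibM N T d s i = Max ((\<lambda>j. slope N T d s i j) ` {i<..N+1})"

definition ibNext :: "nat \<Rightarrow> real \<Rightarrow> real \<Rightarrow> (nat \<Rightarrow> real) \<Rightarrow> nat \<Rightarrow> nat" where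
  "ibNext N T d s i = Max {j \<in> {i<..N+1}. slope N T d s i j = ibM N T d s i}"

fun ibIdx :: "nat \<Rightarrow> real \<Rightarrow> real \<Rightarrow> (nat \<Rightarrow> real) \<Rightarrow> nat \<Rightarrow> nat" where
  "ibIdx N T d s 0 = 0"
| "ibIdx N T d s (Suc k) =
     (if ibIdx N T d s k < N + 1 then ibNext N T d s (ibIdx N T d s k) else ibIdx N T d s k)"

text \<open>Step 3: output xbar_i = M_k + d for the step k with i_k < i <= i_{k+1}.\<close>
definition ibXbar :: "nat \<Rightarrow> real \<Rightarrow> real \<Rightarrow> (nat \<Rightarrow> real) \<Rightarrow> nat \<Rightarrow> real" where
  "ibXbar N T d s i =
     (let k = (LEAST k. i \<le> ibIdx N T d s (Suc k)) in ibM N T d s (ibIdx N T d s k) + d)"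

definition feasPe :: "nat \<Rightarrow> real \<Rightarrow> real \<Rightarrow> (nat \<Rightarrow> real) \<Rightarrow> (nat \<Rightarrow> real) \<Rightarrow> bool" where
  "feasPe N T d s x \<longleftrightarrow>
     (\<forall>k\<in>{1..N}. (\<Sum>i=1..k. x i) \<ge> s k + real k * d) \<and>
     (\<Sum>i=1..N+1. x i) = T + real N * d"

definition objPe :: "nat \<Rightarrow> (nat \<Rightarrow> real) \<Rightarrow> real" where
  "objPe N x = (\<Sum>i=1..N+1. (x i)^2)"

end

theory Submission
  imports Defs
begin

context
  fixes N :: nat and T d :: real and s :: "nat \<Rightarrow> real"
begin

lemma ibM_in:
  assumes "i < N + 1"
  shows "ibM N T d s i \<in> (\<lambda>j. slope N T d s i j) ` {i<..N+1}"
  unfolding ibM_def using assms by (intro Max_in) auto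

lemma slope_le_M:
  assumes "i < N + 1" "j \<in> {i<..N+1}"
  shows "slope N T d s i j \<le> ibM N T d s i"
  unfolding ibM_def using assms by (intro Max_ge) auto

lemma next_props:
  assumes "i < N + 1"
  shows "ibNext N T d s i \<in> {i<..N+1} \<and> slope N T d s i (ibNext N T d s i) = ibM N T d s i"
proof -
  have "{j \<in> {i<..N+1}. slope N T d s i j = ibM N T d s i} \<noteq> {}"
    using ibM_in[OF assms] by auto
  then have "ibNext N T d s i \<in> {j \<in> {i<..N+1}. slope N T d s i j = ibM N T d s i}"
    unfolding ibNext_def by (intro Max_in) auto
  then show ?thesis by auto
qed

lemma slope_lt_M:
  assumes "i < N + 1" "ibNext N T d s i < j" "j \<le> N + 1"
  shows "slope N T d s i j < ibM N T d s i"
proof -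
  have ij: "j \<in> {i<..N+1}" using next_props[OF assms(1)] assms by auto
  have "slope N T d s i j \<noteq> ibM N T d s i"
  proof
    assume "slope N T d s i j = ibM N T d s i"
    then have "j \<le> ibNext N T d s i" unfolding ibNext_def using ij by (intro Max_ge) auto
    then show False using assms by auto
  qed
  then show ?thesis using slope_le_M[OF assms(1) ij] by auto
qed

declare ibIdx.simps(2)[simp del]

lemma idx_S1: "ibIdx N T d s k < N + 1 \<Longrightarrow> ibIdx N T d s (Suc k) = ibNext N T d s (ibIdx N T d s k)"
  by (simp add: ibIdx.simps(2))

lemma idx_S2: "\<not> ibIdx N T d s k < N + 1 \<Longrightarrow> ibIdx N T d s (Suc k) = ibIdx N T d s k"
  by (simp add: ibIdx.simps(2))

lemma idx_le: "ibIdx N T d s k \<le> N + 1"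
proof (induction k)
  case 0 then show ?case by simp
next
  case (Suc k) then show ?case using next_props[of "ibIdx N T d s k"] idx_S1[of k] idx_S2[of k]
    by (cases "ibIdx N T d s k < N + 1") auto
qed

lemma idx_lt_Suc: "ibIdx N T d s k < N + 1 \<Longrightarrow> ibIdx N T d s k < ibIdx N T d s (Suc k)"
  using next_props idx_S1 by auto

lemma idx_Suc_ge: "ibIdx N T d s k \<le> ibIdx N T d s (Suc k)"
  using idx_lt_Suc[of k] idx_S2[of k] by (cases "ibIdx N T d s k < N + 1") auto

lemma idx_mono: "k \<le> k' \<Longrightarrow> ibIdx N T d s k \<le> ibIdx N T d s k'"
  by (induction k' rule: dec_induct) (auto intro: order_trans idx_Suc_ge)

lemma idx_min: "min k (N + 1) \<le> ibIdx N T d s k"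
proof (induction k)
  case 0 then show ?case by simp
next
  case (Suc k)
  show ?case
  proof (cases "ibIdx N T d s k < N + 1")
    case True
    then show ?thesis using idx_lt_Suc[OF True] Suc by linarith
  next
    case False
    then show ?thesis using idx_le[of k] Suc idx_S2[of k] by simp
  qed
qed

lemma idx_end: "ibIdx N T d s (N + 1) = N + 1"
  using idx_min[of "N+1"] idx_le[of "N+1"] by simp

lemma xbar_seg:
  assumes "ibIdx N T d s k < j" "j \<le> ibIdx N T d s (Suc k)"
  shows "ibXbar N T d s j = ibM N T d s (ibIdx N T d s k) + d"
proof -
  have "(LEAST k'. j \<le> ibIdx N T d s (Suc k')) = k"
  proof (rule Least_equality)
    show "j \<le> ibIdx N T d s (Suc k)" by fact
  next
    fix k' assume h: "j \<le> ibIdx N T d s (Suc k')"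
    show "k \<le> k'"
    proof (rule ccontr)
      assume "\<not> k \<le> k'"
      then have "ibIdx N T d s (Suc k') \<le> ibIdx N T d s k" by (intro idx_mono) auto
      then show False using h assms by auto
    qed
  qed
  then show ?thesis unfolding ibXbar_def Let_def by simp
qed

lemma seg_exists:
  assumes "1 \<le> j" "j \<le> N + 1"
  shows "\<exists>k. ibIdx N T d s k < j \<and> j \<le> ibIdx N T d s (Suc k)"
proof -
  have ex: "\<exists>k. j \<le> ibIdx N T d s (Suc k)"
    using idx_end assms by (intro exI[of _ N]) simp
  define k where "k = (LEAST k. j \<le> ibIdx N T d s (Suc k))"
  have 1: "j \<le> ibIdx N T d s (Suc k)" unfolding k_def by (rule LeastI_ex[OF ex])
  have 2: "ibIdx N T d s k < j"
  proof (cases k)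
    case 0 then show ?thesis using assms by simp
  next
    case (Suc k')
    have "\<not> j \<le> ibIdx N T d s (Suc k')"
      using not_less_Least[of k' "\<lambda>k. j \<le> ibIdx N T d s (Suc k)"] Suc unfolding k_def by simp
    then show ?thesis using Suc by simp
  qed
  show ?thesis using 1 2 by blast
qed

lemma seg_sum:
  assumes "ibIdx N T d s k < N + 1" "ibIdx N T d s k \<le> j" "j \<le> ibIdx N T d s (Suc k)"
  shows "(\<Sum>i=1..j. ibXbar N T d s i) = (\<Sum>i=1..ibIdx N T d s k. ibXbar N T d s i)
          + (real j - real (ibIdx N T d s k)) * (ibM N T d s (ibIdx N T d s k) + d)"
  using assms(2,3)
proof (induction j rule: dec_induct)
  case base then show ?case by simp
next
  case (step j)
  have "ibXbar N T d s (Suc j) = ibM N T d s (ibIdx N T d s k) + d"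
    using step by (intro xbar_seg) auto
  moreover have "{1..Suc j} = insert (Suc j) {1..j}" by auto
  ultimately show ?case using step by (simp add: algebra_simps)
qed

lemma vertex:
  "(\<Sum>i=1..ibIdx N T d s k. ibXbar N T d s i) - real (ibIdx N T d s k) * d = sx N T d s (ibIdx N T d s k)"
proof (induction k)
  case 0 then show ?case by (simp add: sx_def)
next
  case (Suc k)
  show ?case
  proof (cases "ibIdx N T d s k < N + 1")
    case False
    then show ?thesis using Suc idx_S2[of k] by simp
  next
    case True
    let ?a = "ibIdx N T d s k" and ?b = "ibIdx N T d s (Suc k)"
    have b: "?b = ibNext N T d s ?a" using True by (rule idx_S1)
    have ab: "?a < ?b" using idx_lt_Suc[OF True] .
    have sl: "slope N T d s ?a ?b = ibM N T d s ?a" using next_props[OF True] b by simp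
    have "(\<Sum>i=1..?b. ibXbar N T d s i) = (\<Sum>i=1..?a. ibXbar N T d s i)
          + (real ?b - real ?a) * (ibM N T d s ?a + d)"
      using seg_sum[OF True, of ?b] ab by simp
    moreover have "(real ?b - real ?a) * ibM N T d s ?a = sx N T d s ?b - sx N T d s ?a"
      using sl ab unfolding slope_def by (simp add: field_simps)
    ultimately show ?thesis using Suc by (simp add: algebra_simps)
  qed
qed

lemma above:
  assumes "1 \<le> j" "j \<le> N + 1"
  shows "(\<Sum>i=1..j. ibXbar N T d s i) - real j * d \<ge> sx N T d s j"
proof -
  obtain k where k: "ibIdx N T d s k < j" "j \<le> ibIdx N T d s (Suc k)"
    using seg_exists[OF assms] by blast
  let ?a = "ibIdx N T d s k"
  have a: "?a < N + 1" using k assms by simp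
  have "slope N T d s ?a j \<le> ibM N T d s ?a"
    using slope_le_M[OF a] k assms by auto
  then have "sx N T d s j - sx N T d s ?a \<le> (real j - real ?a) * ibM N T d s ?a"
    using k unfolding slope_def by (simp add: field_simps)
  moreover have "(\<Sum>i=1..j. ibXbar N T d s i) = (\<Sum>i=1..?a. ibXbar N T d s i)
          + (real j - real ?a) * (ibM N T d s ?a + d)"
    using seg_sum[OF a, of j] k by simp
  ultimately show ?thesis using vertex[of k] by (simp add: algebra_simps)
qed

lemma xbar_feas: "feasPe N T d s (ibXbar N T d s)"
proof -
  have "\<forall>k\<in>{1..N}. (\<Sum>i=1..k. ibXbar N T d s i) \<ge> s k + real k * d"
  proof
    fix k assume k: "k \<in> {1..N}"
    have "sx N T d s k = s k" using k by (simp add: sx_def)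
    then show "(\<Sum>i=1..k. ibXbar N T d s i) \<ge> s k + real k * d" using above[of k] k by auto
  qed
  moreover have "(\<Sum>i=1..N+1. ibXbar N T d s i) = T + real N * d"
    using vertex[of "N+1"] idx_end by (simp add: sx_def algebra_simps)
  ultimately show ?thesis unfolding feasPe_def by blast
qed

lemma step_term:
  assumes "feasPe N T d s y" "j \<in> {1..N}"
  shows "(ibXbar N T d s j - ibXbar N T d s (j+1)) * (\<Sum>i=1..j. y i - ibXbar N T d s i) \<ge> 0"
proof -
  obtain k where k: "ibIdx N T d s k < j" "j \<le> ibIdx N T d s (Suc k)"
    using seg_exists[of j] assms by auto
  let ?a = "ibIdx N T d s k" and ?b = "ibIdx N T d s (Suc k)"
  have a: "?a < N + 1" using k assms by simp
  show ?thesis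
  proof (cases "j < ?b")
    case True
    then have "ibXbar N T d s j = ibXbar N T d s (j+1)"
      using xbar_seg[OF k] xbar_seg[of k "j+1"] k by simp
    then show ?thesis by simp
  next
    case False
    then have jb: "j = ?b" using k by simp
    have bN: "?b < N + 1" using jb assms by simp
    have c: "?b < ibIdx N T d s (Suc (Suc k))" using idx_lt_Suc[OF bN] .
    have x1: "ibXbar N T d s (j+1) = ibM N T d s ?b + d"
      using xbar_seg[of "Suc k" "j+1"] jb c by simp
    have x0: "ibXbar N T d s j = ibM N T d s ?a + d" using xbar_seg[OF k] .
    have bnext: "?b = ibNext N T d s ?a" using a by (rule idx_S1)
    let ?c = "ibIdx N T d s (Suc (Suc k))"
    have cnext: "?c = ibNext N T d s ?b" using bN by (rule idx_S1)
    have cle: "?c \<le> N + 1" by (rule idx_le)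
    have ab: "?a < ?b" using k jb by simp
    have s1: "slope N T d s ?a ?c < ibM N T d s ?a"
      using slope_lt_M[OF a, of ?c] bnext c cle by simp
    have s2: "slope N T d s ?a ?b = ibM N T d s ?a" using next_props[OF a] bnext by simp
    have s3: "slope N T d s ?b ?c = ibM N T d s ?b" using next_props[OF bN] cnext by simp
    have e1: "sx N T d s ?c - sx N T d s ?a < (real ?c - real ?a) * ibM N T d s ?a"
      using s1 ab c unfolding slope_def by (simp add: field_simps)
    have e2: "sx N T d s ?b - sx N T d s ?a = (real ?b - real ?a) * ibM N T d s ?a"
      using s2 ab unfolding slope_def by (simp add: field_simps)
    have e3: "sx N T d s ?c - sx N T d s ?b = (real ?c - real ?b) * ibM N T d s ?b"
      using s3 c unfolding slope_def by (simp add: field_simps)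
    have "(real ?c - real ?b) * ibM N T d s ?b < (real ?c - real ?b) * ibM N T d s ?a"
      using e1 e2 e3 by (simp add: algebra_simps)
    then have Mle: "ibM N T d s ?b \<le> ibM N T d s ?a"
      using c by (simp add: mult_less_cancel_left)
    have "(\<Sum>i=1..j. ibXbar N T d s i) - real j * d = s j"
      using vertex[of "Suc k"] jb assms by (simp add: sx_def)
    moreover have "(\<Sum>i=1..j. y i) \<ge> s j + real j * d" using assms unfolding feasPe_def by auto
    ultimately have "(\<Sum>i=1..j. y i - ibXbar N T d s i) \<ge> 0"
      by (simp add: sum_subtractf)
    then show ?thesis using x0 x1 Mle by simp
  qed
qed

end

lemma abel:
  fixes a w :: "nat \<Rightarrow> real"
  shows "(\<Sum>i=1..n. a i * w i) = a n * (\<Sum>i=1..n. w i) + (\<Sum>j=1..<n. (a j - a (j+1)) * (\<Sum>i=1..j. w i))"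
proof (induction n)
  case 0 then show ?case by simp
next
  case (Suc n)
  show ?case
  proof (cases n)
    case 0 then show ?thesis by simp
  next
    case (Suc m)
    have "{1..<Suc n} = insert n {1..<n}" using Suc by auto
    then show ?thesis using Suc.IH by (simp add: algebra_simps)
  qed
qed

theorem lemma5:
  fixes N :: nat and d T :: real and s xe :: "nat \<Rightarrow> real"
  assumes "N \<ge> 1" and "d > 0" and "T \<ge> real (N + 1) * d"
    and "0 \<le> s 1" and "\<And>k. 1 \<le> k \<Longrightarrow> k < N \<Longrightarrow> s k \<le> s (k + 1)"
    and "feasPe N T d s xe"
    and "\<And>y. feasPe N T d s y \<Longrightarrow> objPe N xe \<le> objPe N y"
  shows "\<forall>i\<in>{1..N}. xe i = ibXbar N T d s i"
proof -
  let ?x = "ibXbar N T d s"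
  let ?w = "\<lambda>i. xe i - ?x i"
  have fx: "feasPe N T d s ?x" by (rule xbar_feas)
  have W: "(\<Sum>i=1..N+1. ?w i) = 0"
    using fx assms(6) unfolding feasPe_def by (simp add: sum_subtractf)
  have "(\<Sum>i=1..N+1. ?x i * ?w i) = (\<Sum>j=1..<N+1. (?x j - ?x (j+1)) * (\<Sum>i=1..j. ?w i))"
    using abel[of ?x ?w "N+1"] W by simp
  also have "\<dots> \<ge> 0"
    using step_term[OF assms(6)] by (intro sum_nonneg) auto
  finally have cross: "(\<Sum>i=1..N+1. ?x i * ?w i) \<ge> 0" .
  have "objPe N xe = (\<Sum>i=1..N+1. ?x i ^ 2 + 2 * (?x i * ?w i) + ?w i ^ 2)"
    unfolding objPe_def by (intro sum.cong) (auto simp: power2_eq_square algebra_simps)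
  also have "\<dots> = objPe N ?x + 2 * (\<Sum>i=1..N+1. ?x i * ?w i) + (\<Sum>i=1..N+1. ?w i ^ 2)"
    unfolding objPe_def by (simp add: sum.distrib sum_distrib_left)
  finally have "objPe N xe \<ge> objPe N ?x + (\<Sum>i=1..N+1. ?w i ^ 2)" using cross by simp
  moreover have "objPe N xe \<le> objPe N ?x" using assms(7)[OF fx] .
  ultimately have "(\<Sum>i=1..N+1. ?w i ^ 2) \<le> 0" by simp
  then have "(\<Sum>i=1..N+1. ?w i ^ 2) = 0" using sum_nonneg[of "{1..N+1}" "\<lambda>i. ?w i ^ 2"] by simp
  then have "\<forall>i\<in>{1..N+1}. ?w i ^ 2 = 0" by (subst (asm) sum_nonneg_eq_0_iff) auto
  then show ?thesis by auto
qed

end
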